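(* Let $\bar A=\{A_i\}$ be a partition with $A_i\in(P_i,Q_i)$ for all $i$, and fix $j$. (i) If $x\in[A_j,Q_j)$ and $T_{j-1}(x)\in(P_{\theta(j-1)},A_{\theta(j-1)}]$, then $T_{\theta(j-1)-1}T_{j-1}(x)\in(x,P_{j+1})$. (ii) If $x\in(P_j,A_j]$ and $T_j(x)\in[A_{\rho(j)+1},Q_{\rho(j)+1})$, then $T_{\rho(j)+1}T_j(x)\in(Q_{j-1},x)$.
   Context: Setting. Fix $g\ge 2$; indices are mod $8g-4$. Let $\mathcal F$ be the regular hyperbolic $(8g-4)$-gon in the unit disk centered at $0$ with all interior angles $\pi/2$, sides labeled $1,\dots,8g-4$ counterclockwise, side $i$ joining vertices $V_i$ and $V_{i+1}$. The complete geodesic extending side $i$ goes from $P_i$ (beyond $V_i$) to $Q_{i+1}$ (beyond $V_{i+1}$) on the unit circle; counterclockwise order $P_1,Q_1,P_2,Q_2,\dots,P_{8g-4},Q_{8g-4}$. $\sigma(i)=4g-i$ ($i$ odd), $\sigma(i)=2-i$ ($i$ even), $\rho(i)=\sigma(i)+1$, $\theta(i)=\sigma(i)-1$. $T_i$ is the Möbius transformation mapping side $i$ onto side $\sigma(i)$, with isometric circle the geodesic $P_iQ_{i+1}$, mapped onto the geodesic $Q_{\sigma(i)+1}P_{\sigma(i)}$, inside to outside. Arcs $[A,B)$, $(A,B]$, $(A,B)$ are counterclockwise from $A$ to $B$. *)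

theory Defs
  imports "HOL-Analysis.Analysis"
begin

definition Nsides :: "nat \<Rightarrow> int" where
  "Nsides g = 8 * int g - 4"

definition delta :: "nat \<Rightarrow> real" where
  "delta g = 2 * pi / real_of_int (Nsides g)"

text \<open>Direction of the midpoint of side i (a fixed rotation convention).\<close>
definition alpha :: "nat \<Rightarrow> int \<Rightarrow> real" where
  "alpha g i = real_of_int i * delta g"

text \<open>Half of the angular width of the geodesic extending a side: for a regular
  N-gon with interior angles pi/2, the Euclidean circle carrying side i has center
  at distance 1/sqrt(cos delta) from 0, hence cos beta = sqrt (cos delta).\<close>
definition beta :: "nat \<Rightarrow> real" where
  "beta g = arccos (sqrt (cos (delta g)))"

text \<open>Endpoints: the geodesic extending side i goes from P_i to Q_(i+1).\<close>
definition Pt :: "nat \<Rightarrow> int \<Rightarrow> complex" where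
  "Pt g i = cis (alpha g i - beta g)"

definition Qt :: "nat \<Rightarrow> int \<Rightarrow> complex" where
  "Qt g i = cis (alpha g (i - 1) + beta g)"

definition sigma :: "nat \<Rightarrow> int \<Rightarrow> int" where
  "sigma g i = (if odd i then 4 * int g - i else 2 - i)"

definition rho :: "nat \<Rightarrow> int \<Rightarrow> int" where
  "rho g i = sigma g i + 1"

definition theta :: "nat \<Rightarrow> int \<Rightarrow> int" where
  "theta g i = sigma g i - 1"

text \<open>Distance from 0 to the centre, and radius, of the isometric circles.\<close>
definition Cdist :: "nat \<Rightarrow> real" where
  "Cdist g = 1 / sqrt (cos (delta g))"

definition Rrad :: "nat \<Rightarrow> real" where
  "Rrad g = sqrt ((Cdist g)\<^sup>2 - 1)"

text \<open>T_i(z) = (a z + c)/(conj c z + conj a) with |a|^2 - |c|^2 = 1, isometric circle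
  |conj c z + conj a| = 1 equal to the circle of side i (centre -conj a / conj c),
  and isometric circle of T_i^{-1} (centre a / conj c) equal to the circle of side sigma(i).
  These conditions determine T_i uniquely (as a Moebius map).\<close>
definition Tm :: "nat \<Rightarrow> int \<Rightarrow> complex \<Rightarrow> complex" where
  "Tm g i z =
     (let s = sigma g i;
          th = (alpha g i + alpha g s) / 2;
          c = \<i> * cis th / complex_of_real (Rrad g);
          a = complex_of_real (Cdist g) * cis (alpha g s) * cnj c
      in (a * z + c) / (cnj c * z + cnj a))"

definition ccw :: "complex \<Rightarrow> complex \<Rightarrow> real" where
  "ccw A x = (let t = Arg (x / A) in if t < 0 then t + 2 * pi else t)"

definition arc_co :: "complex \<Rightarrow> complex \<Rightarrow> complex set" where
  "arc_co A B = {x. cmod x = 1 \<and> ccw A x < ccw A B}"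

definition arc_oc :: "complex \<Rightarrow> complex \<Rightarrow> complex set" where
  "arc_oc A B = {x. cmod x = 1 \<and> 0 < ccw A x \<and> ccw A x \<le> ccw A B}"

definition arc_oo :: "complex \<Rightarrow> complex \<Rightarrow> complex set" where
  "arc_oo A B = {x. cmod x = 1 \<and> 0 < ccw A x \<and> ccw A x < ccw A B}"

end

theory Submission
  imports Defs
begin



definition ori :: "complex \<Rightarrow> complex \<Rightarrow> complex \<Rightarrow> real" where
  "ori p q r = Im (cnj (q - p) * (r - p))"

lemma ori_cyc: "ori q r p = ori p q r"
  unfolding ori_def by (simp add: algebra_simps)

lemma ori_swap: "ori p r q = - ori p q r"
  unfolding ori_def by (simp add: algebra_simps)

lemma ori_cnj: "ori (cnj p) (cnj q) (cnj r) = - ori p q r"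
  unfolding ori_def by (simp add: algebra_simps)

lemma ori_rot: assumes "cmod a = 1" shows "ori (a*p) (a*q) (a*r) = ori p q r"
proof -
  have "cnj (a*q - a*p) * (a*r - a*p) = (cnj a * a) * (cnj (q-p) * (r-p))"
    by (simp add: algebra_simps)
  also have "cnj a * a = 1" using assms
    by (metis complex_mod_mult_cnj mult.commute norm_one of_real_1 power_one complex_norm_square)
  finally show ?thesis unfolding ori_def by simp
qed

lemma trig3: fixes x y :: real shows "sin (2*y) + sin (2*x) - sin (2*x+2*y) = 4 * sin (x+y) * sin y * sin x"
proof -
  have a: "sin (2*x+2*y) = sin (2*x) * cos (2*y) + cos (2*x) * sin (2*y)" by (rule sin_add)
  have b: "sin (x+y) = sin x * cos y + cos x * sin y" by (rule sin_add)
  have c: "sin (2*x) = 2 * sin x * cos x" "sin (2*y) = 2 * sin y * cos y" by (simp_all add: sin_double)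
  have d: "cos (2*x) = 1 - 2 * sin x ^2" "cos (2*y) = 1 - 2 * sin y ^2" by (simp_all add: cos_double_sin)
  show ?thesis unfolding a b c d by (simp add: algebra_simps power2_eq_square)
qed

lemma ori_cis: fixes t1 t2 t3 :: real shows "ori (cis t1) (cis t2) (cis t3) = 4 * sin ((t3-t1)/2) * sin ((t3-t2)/2) * sin ((t2-t1)/2)"
proof -
  have "ori (cis t1) (cis t2) (cis t3) = sin (t3-t2) + sin (t2-t1) - sin (t3-t1)"
    unfolding ori_def by (simp add: cis.code sin_diff algebra_simps)
  moreover have "t3-t2 = 2*((t3-t2)/2)" "t2-t1 = 2*((t2-t1)/2)" "t3-t1 = 2*((t2-t1)/2)+2*((t3-t2)/2)"
    "(t3-t1)/2 = (t2-t1)/2 + (t3-t2)/2" by (simp_all add: field_simps)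
  ultimately show ?thesis using trig3[of "(t3-t2)/2" "(t2-t1)/2"] by metis
qed


lemma sgn_sin: fixes u :: real assumes "-pi < u" "u < pi" shows "sgn (sin u) = sgn u"
proof (cases "u > 0")
  case True then show ?thesis using sin_gt_zero[of u] assms by simp
next
  case False
  show ?thesis
  proof (cases "u = 0")
    case True then show ?thesis by simp
  next
    case False
    then have "u < 0" using \<open>\<not> u > 0\<close> by simp
    then have "sin (-u) > 0" using sin_gt_zero[of "-u"] assms by simp
    then show ?thesis using \<open>u < 0\<close> by simp
  qed
qed

lemma ccw_props:
  assumes "cmod A = 1" "cmod x = 1"
  shows "0 \<le> ccw A x \<and> ccw A x < 2*pi \<and> x = A * cis (ccw A x)"
proof -
  define z where "z = x / A"
  have A0: "A \<noteq> 0" using assms by auto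
  have z1: "cmod z = 1" using assms by (simp add: z_def norm_divide)
  then have z0: "z \<noteq> 0" by auto
  have "sgn z = z" using z1 by (simp add: sgn_div_norm)
  then have cz: "cis (Arg z) = z" using cis_Arg[OF z0] by simp
  have b: "-pi < Arg z" "Arg z \<le> pi" using Arg_bounded[of z] by auto
  have x: "x = A * z" using A0 by (simp add: z_def)
  show ?thesis
  proof (cases "Arg z < 0")
    case True
    then have "ccw A x = Arg z + 2*pi" unfolding ccw_def Let_def z_def[symmetric] by simp
    moreover have "cis (Arg z + 2*pi) = z" using cz by (simp add: cis_mult[symmetric])
    ultimately show ?thesis using True b x by simp
  next
    case False
    then have "ccw A x = Arg z" unfolding ccw_def Let_def z_def[symmetric] by simp
    then show ?thesis using False b x cz by simp
  qed
qed

lemma ccw_self: assumes "A \<noteq> 0" shows "ccw A A = 0"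
  using assms unfolding ccw_def by simp

lemma ori_ang:
  assumes "cmod a = 1" "cmod p = 1" "cmod q = 1" "cmod r = 1"
  shows "sgn (ori p q r) = sgn ((ccw a r - ccw a p) * (ccw a r - ccw a q) * (ccw a q - ccw a p))"
proof -
  define tp tq tr where "tp = ccw a p" "tq = ccw a q" "tr = ccw a r"
  note P = ccw_props[OF assms(1) assms(2)] ccw_props[OF assms(1) assms(3)] ccw_props[OF assms(1) assms(4)]
  have "ori p q r = ori (a * cis tp) (a * cis tq) (a * cis tr)"
    using P by (simp add: tp_tq_tr_def)
  also have "\<dots> = ori (cis tp) (cis tq) (cis tr)" by (rule ori_rot[OF assms(1)])
  also have "\<dots> = 4 * sin ((tr-tp)/2) * sin ((tr-tq)/2) * sin ((tq-tp)/2)" by (rule ori_cis)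
  finally have e: "ori p q r = 4 * sin ((tr-tp)/2) * sin ((tr-tq)/2) * sin ((tq-tp)/2)" .
  have s1: "sgn (sin ((tr-tp)/2)) = sgn ((tr-tp)/2)" "sgn (sin ((tr-tq)/2)) = sgn ((tr-tq)/2)"
     "sgn (sin ((tq-tp)/2)) = sgn ((tq-tp)/2)"
    by (rule sgn_sin; use P in \<open>simp add: tp_tq_tr_def\<close>)+
  have "sgn (ori p q r) = sgn (sin ((tr-tp)/2)) * sgn (sin ((tr-tq)/2)) * sgn (sin ((tq-tp)/2))"
    unfolding e by (simp add: sgn_mult)
  also have "\<dots> = sgn ((tr-tp)/2) * sgn ((tr-tq)/2) * sgn ((tq-tp)/2)" using s1 by simp
  also have "\<dots> = sgn ((tr - tp) * (tr - tq) * (tq - tp))" by (simp add: sgn_mult)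
  finally show ?thesis by (simp add: tp_tq_tr_def)
qed


lemma ori_pos_ang:
  assumes "cmod a = 1" "cmod p = 1" "cmod q = 1" "cmod r = 1"
  shows "ori p q r > 0 \<longleftrightarrow> (ccw a r - ccw a p) * (ccw a r - ccw a q) * (ccw a q - ccw a p) > 0"
  using ori_ang[OF assms] by (metis sgn_greater)

lemma ori_base:
  assumes "cmod a = 1" "cmod x = 1" "cmod c = 1"
  shows "ori a x c > 0 \<longleftrightarrow> 0 < ccw a x \<and> ccw a x < ccw a c"
proof -
  have a0: "a \<noteq> 0" using assms by auto
  have h: "ori a x c > 0 \<longleftrightarrow> ccw a c * (ccw a c - ccw a x) * ccw a x > 0"
    using ori_pos_ang[OF assms(1) assms(1) assms(2) assms(3)] by (simp add: ccw_self[OF a0])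
  have "0 \<le> ccw a x" "0 \<le> ccw a c" using ccw_props assms by auto
  then show ?thesis unfolding h
    by (smt (verit, best) mult_le_0_iff mult_pos_pos zero_less_mult_iff)
qed

lemma arc_oo_iff:
  assumes "cmod a = 1" "cmod x = 1" "cmod c = 1"
  shows "x \<in> arc_oo a c \<longleftrightarrow> ori a x c > 0"
  using ori_base[OF assms] assms(2) unfolding arc_oo_def by auto

lemma arc_oo_unit: "x \<in> arc_oo a c \<Longrightarrow> cmod x = 1"
  unfolding arc_oo_def by auto

lemma arc_co_cases:
  assumes "cmod a = 1" "cmod c = 1" "x \<in> arc_co a c"
  shows "cmod x = 1 \<and> (x = a \<or> ori a x c > 0)"
proof -
  have x1: "cmod x = 1" and lt: "ccw a x < ccw a c" using assms(3) unfolding arc_co_def by auto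
  note P = ccw_props[OF assms(1) x1]
  show ?thesis
  proof (cases "ccw a x = 0")
    case True then have "x = a" using P by simp
    then show ?thesis using x1 by simp
  next
    case False then have "0 < ccw a x" using P by simp
    then show ?thesis using ori_base[OF assms(1) x1 assms(2)] lt x1 by simp
  qed
qed

lemma arc_oc_cases:
  assumes "cmod a = 1" "cmod c = 1" "x \<in> arc_oc a c"
  shows "cmod x = 1 \<and> (x = c \<or> ori a x c > 0)"
proof -
  have x1: "cmod x = 1" and lt: "ccw a x \<le> ccw a c" "0 < ccw a x" using assms(3) unfolding arc_oc_def by auto
  note P = ccw_props[OF assms(1) x1] ccw_props[OF assms(1) assms(2)]
  show ?thesis
  proof (cases "ccw a x = ccw a c")
    case True then have "x = c" using P by metis
    then show ?thesis using x1 by simp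
  next
    case False then show ?thesis using ori_base[OF assms(1) x1 assms(2)] lt x1 by simp
  qed
qed

lemma cyc1:
  assumes "cmod a = 1" "cmod x = 1" "cmod c = 1" "cmod d = 1" "ori a x c > 0" "ori a c d > 0"
  shows "ori a x d > 0"
  using ori_base[of a x c] ori_base[of a c d] ori_base[of a x d] assms by auto

lemma cyc2:
  assumes "cmod p = 1" "cmod a = 1" "cmod x = 1" "cmod q = 1" "ori p a q > 0" "ori a x q > 0"
  shows "ori p x q > 0"
proof -
  have p0: "p \<noteq> 0" using assms by auto
  have h1: "0 < ccw p a" "ccw p a < ccw p q" using ori_base[of p a q] assms by auto
  have "(ccw p q - ccw p a) * (ccw p q - ccw p x) * (ccw p x - ccw p a) > 0"
    using ori_pos_ang[of p a x q] assms by auto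
  then have "(ccw p q - ccw p x) * (ccw p x - ccw p a) > 0" using h1
    by (smt (verit) mult_pos_pos zero_less_mult_iff mult.assoc)
  then have "ccw p a < ccw p x \<and> ccw p x < ccw p q" using h1
    by (smt (verit) mult_nonneg_nonpos mult_nonpos_nonneg)
  then show ?thesis using ori_base[of p x q] assms h1 by auto
qed

lemma cyc4:
  assumes "cmod z = 1" "cmod w = 1" "cmod v = 1" "cmod y = 1" "ori z w v > 0" "ori z v y > 0"
  shows "ori w v y > 0"
proof -
  have h: "0 < ccw z w" "ccw z w < ccw z v" "ccw z v < ccw z y"
    using ori_base[of z w v] ori_base[of z v y] assms by auto
  have "(ccw z y - ccw z w) * (ccw z y - ccw z v) * (ccw z v - ccw z w) > 0"
    using h by (simp add: mult_pos_pos)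
  then show ?thesis using ori_pos_ang[of z w v y] assms by auto
qed


lemma unit_cnj: assumes "cmod z = 1" shows "cnj z = 1 / z"
proof -
  have "z * cnj z = 1" using complex_norm_square[of z] assms by simp
  moreover have "z \<noteq> 0" using assms by auto
  ultimately show ?thesis by (simp add: field_simps)
qed

lemma ori_unit:
  assumes "cmod p = 1" "cmod q = 1" "cmod r = 1"
  shows "complex_of_real (ori p q r) = (p-q)*(r-p)*(r-q)/(2*\<i>*p*q*r)"
proof -
  define Z where "Z = cnj (q - p) * (r - p)"
  have i: "complex_of_real (Im Z) = (Z - cnj Z) / (2*\<i>)"
    by (simp add: complex_eq_iff)
  have p0: "p \<noteq> 0" "q \<noteq> 0" "r \<noteq> 0" using assms by auto
  have z: "Z = (1/q - 1/p)*(r-p)" unfolding Z_def using unit_cnj[OF assms(1)] unit_cnj[OF assms(2)] by simp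
  have cz: "cnj Z = (q-p)*(1/r - 1/p)" unfolding Z_def using unit_cnj[OF assms(1)] unit_cnj[OF assms(3)] by simp
  have o: "ori p q r = Im Z" by (simp add: ori_def Z_def)
  have "complex_of_real (ori p q r) = (Z - cnj Z) / (2*\<i>)" using i o by simp
  also have "\<dots> = ((1/q - 1/p)*(r-p) - (q-p)*(1/r - 1/p)) / (2*\<i>)"
    by (subst cz, subst z, rule refl)
  also have "\<dots> = (p-q)*(r-p)*(r-q)/(2*\<i>*p*q*r)"
    using p0 by (simp add: field_simps)
  finally show ?thesis .
qed

definition Fm :: "real \<Rightarrow> complex \<Rightarrow> complex" where
  "Fm C z = (1 - complex_of_real C * z) / (complex_of_real C - z)"

lemma Fden: assumes "C > 1" "cmod z = 1" shows "complex_of_real C - z \<noteq> 0"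
proof
  assume "complex_of_real C - z = 0"
  then have "cmod z = C" by (metis eq_iff_diff_eq_0 norm_of_real abs_of_pos assms(1) less_trans zero_less_one)
  then show False using assms by simp
qed

lemma F_unit: assumes "C > 1" "cmod z = 1" shows "cmod (Fm C z) = 1"
proof -
  have "1 - complex_of_real C * z = - (z * cnj (complex_of_real C - z))"
    using unit_cnj[OF assms(2)] assms(2) by (auto simp: field_simps)
  then have "cmod (1 - complex_of_real C * z) = cmod (complex_of_real C - z)"
    using assms(2) by (metis complex_mod_cnj mult_1 norm_minus_cancel norm_mult)
  then show ?thesis unfolding Fm_def using Fden[OF assms] by (simp add: norm_divide)
qed

lemma F_inv: assumes "C > 1" "cmod z = 1" shows "Fm C (Fm C z) = z"
proof -
  have d: "complex_of_real C - z \<noteq> 0" by (rule Fden[OF assms])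
  have c: "complex_of_real C * complex_of_real C - 1 \<noteq> 0"
  proof
    assume "complex_of_real C * complex_of_real C - 1 = 0"
    then have "C * C = 1" by (metis eq_iff_diff_eq_0 of_real_1 of_real_eq_iff of_real_mult)
    then show False using assms(1) by (smt (verit) mult_less_cancel_left1)
  qed
  let ?C = "complex_of_real C"
  have n: "1 - ?C * Fm C z = z*(?C*?C-1)/(?C - z)" unfolding Fm_def using d by (simp add: field_simps; simp add: algebra_simps)
  have m: "?C - Fm C z = (?C*?C-1)/(?C - z)" unfolding Fm_def using d by (simp add: field_simps; simp add: algebra_simps)
  have "Fm C (Fm C z) = (1 - ?C * Fm C z)/(?C - Fm C z)" by (rule Fm_def)
  also have "\<dots> = z" unfolding n m using d c by simp
  finally show ?thesis .
qed


lemma F_diff: assumes "complex_of_real C - p \<noteq> 0" "complex_of_real C - q \<noteq> 0"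
  shows "Fm C p - Fm C q = (1 - complex_of_real C * complex_of_real C) * (p - q) / ((complex_of_real C - p) * (complex_of_real C - q))"
  unfolding Fm_def using assms by (simp add: field_simps; simp add: algebra_simps)

lemma F_alt: assumes "p \<noteq> 0" shows "Fm C p = - p * (complex_of_real C - 1/p) / (complex_of_real C - p)"
proof -
  have "- p * (complex_of_real C - 1/p) = 1 - complex_of_real C * p" using assms by (simp add: field_simps)
  then show ?thesis unfolding Fm_def by simp
qed

lemma normsq_C: assumes "cmod p = 1" shows "(complex_of_real (cmod (complex_of_real C - p)))^2 = (complex_of_real C - p) * (complex_of_real C - 1/p)"
  using complex_norm_square[of "complex_of_real C - p"] unit_cnj[OF assms] by simp

lemma aux_F:
  fixes C p q r cp cq cr :: complex
  assumes "C-p \<noteq> 0" "C-q \<noteq> 0" "C-r \<noteq> 0" "cp \<noteq> 0" "cq \<noteq> 0" "cr \<noteq> 0" "p \<noteq> 0" "q \<noteq> 0" "r \<noteq> 0"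
  shows "((1-C*C)*(p-q)/((C-p)*(C-q))) * ((1-C*C)*(r-p)/((C-r)*(C-p))) * ((1-C*C)*(r-q)/((C-r)*(C-q)))
     / (2*\<i>*(-p*cp/(C-p))*(-q*cq/(C-q))*(-r*cr/(C-r)))
   = (C*C-1)^3/(((C-p)*cp)*((C-q)*cq)*((C-r)*cr)) * ((p-q)*(r-p)*(r-q)/(2*\<i>*p*q*r))"
proof -
  have e: "(1-C*C) = -(C*C-1)" by simp
  show ?thesis unfolding e using assms by (simp add: divide_simps power3_eq_cube) (simp add: algebra_simps)
qed

lemma ori_F:
  assumes C: "C > 1" and u: "cmod p = 1" "cmod q = 1" "cmod r = 1" and pos: "ori p q r > 0"
  shows "ori (Fm C p) (Fm C q) (Fm C r) > 0"
proof -
  let ?C = "complex_of_real C"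
  define k where "k = (C*C-1)^3 / ((cmod (?C - p))^2 * (cmod (?C - q))^2 * (cmod (?C - r))^2)"
  have dp: "?C - p \<noteq> 0" "?C - q \<noteq> 0" "?C - r \<noteq> 0" using Fden C u by auto
  have c1: "C*C - 1 > 0" using C less_1_mult[of C C] by simp
  have k0: "k > 0" unfolding k_def using dp c1 by (simp add: mult_pos_pos)
  have u': "cmod (Fm C p) = 1" "cmod (Fm C q) = 1" "cmod (Fm C r) = 1" using F_unit C u by auto
  have nz: "p \<noteq> 0" "q \<noteq> 0" "r \<noteq> 0" using u by auto
  have fnz: "Fm C p \<noteq> 0" "Fm C q \<noteq> 0" "Fm C r \<noteq> 0" using u' by auto
  have cnz: "?C - 1/p \<noteq> 0" "?C - 1/q \<noteq> 0" "?C - 1/r \<noteq> 0"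
    using fnz F_alt nz by auto
  have kc: "complex_of_real k = (?C*?C-1)^3 / (((?C - p) * (?C - 1/p)) * ((?C - q) * (?C - 1/q)) * ((?C - r) * (?C - 1/r)))"
    unfolding k_def using normsq_C[OF u(1)] normsq_C[OF u(2)] normsq_C[OF u(3)]
    by simp
  have "complex_of_real (ori (Fm C p) (Fm C q) (Fm C r))
      = (Fm C p - Fm C q) * (Fm C r - Fm C p) * (Fm C r - Fm C q) / (2*\<i>*Fm C p*Fm C q*Fm C r)"
    by (rule ori_unit[OF u'])
  also have "\<dots> = complex_of_real k * ((p-q)*(r-p)*(r-q)/(2*\<i>*p*q*r))"
    unfolding F_diff[OF dp(1) dp(2)] F_diff[OF dp(3) dp(1)] F_diff[OF dp(3) dp(2)]
    unfolding F_alt[OF nz(1), of C] F_alt[OF nz(2), of C] F_alt[OF nz(3), of C] kc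
    by (rule aux_F[OF dp cnz nz])
  also have "\<dots> = complex_of_real (k * ori p q r)" using ori_unit[OF u] by simp
  finally have "ori (Fm C p) (Fm C q) (Fm C r) = k * ori p q r" using of_real_eq_iff by blast
  then show ?thesis using k0 pos by simp
qed

lemma U_mobius:
  fixes C w x :: complex
  assumes d1: "C - w*x \<noteq> 0" and d2: "C - w*w*((1 - C*(w*x))/(C - w*x)) \<noteq> 0"
  shows "w * ((1 - C*(w*w*((1 - C*(w*x))/(C - w*x)))) / (C - w*w*((1 - C*(w*x))/(C - w*x))))
       = (w*w*(C*C*w*w - 1) * x + w*C*(1 - w*w)) / (w*C*(w*w - 1) * x + (C*C - w*w))"
    and "w*C*(w*w - 1) * x + (C*C - w*w) = (C - w*w*((1 - C*(w*x))/(C - w*x))) * (C - w*x)"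
proof -
  define y where "y = (1 - C*(w*x))/(C - w*x)"
  have yd: "y * (C - w*x) = 1 - C*(w*x)" unfolding y_def using d1 by simp
  have e2: "w*C*(w*w - 1) * x + (C*C - w*w) = (C - w*w*y) * (C - w*x)" using yd by algebra
  have e1: "w*w*(C*C*w*w - 1) * x + w*C*(1 - w*w) = w*(1 - C*(w*w*y))*(C - w*x)" using yd by algebra
  show "w*C*(w*w - 1) * x + (C*C - w*w) = (C - w*w*((1 - C*(w*x))/(C - w*x))) * (C - w*x)"
    using e2 unfolding y_def .
  show "w * ((1 - C*(w*w*((1 - C*(w*x))/(C - w*x)))) / (C - w*w*((1 - C*(w*x))/(C - w*x))))
       = (w*w*(C*C*w*w - 1) * x + w*C*(1 - w*w)) / (w*C*(w*w - 1) * x + (C*C - w*w))"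
    unfolding e1 e2 y_def[symmetric] using d1 d2 unfolding y_def[symmetric] by simp
qed

lemma U_fix:
  fixes C w b z x :: complex
  assumes K1: "C*C*(w*w+1) = 2*w" and K2: "C*(b+z) = 2" and bv: "b* z = 1"
  shows "w*w*(C*C*w*w - 1) - (C*C - w*w) = w*C*(w*w - 1) * (b + z)"
    and "(w*w*(C*C*w*w - 1) * x + w*C*(1 - w*w)) - z * (w*C*(w*w - 1) * x + (C*C - w*w))
         = (w*w*(C*C*w*w - 1) - z*(w*C*(w*w - 1))) * (x - z)"
    and "(w*w*(C*C*w*w - 1) * x + w*C*(1 - w*w)) - x * (w*C*(w*w - 1) * x + (C*C - w*w))
         = - (w*C*(w*w - 1)) * (x - b) * (x - z)"
  using assms by algebra+


lemma W_ident:
  fixes A1 g1 D Dc w x xi b z :: complex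
  assumes "x*xi = 1" "b*z = 1" "w \<noteq> 0" "D \<noteq> 0" "Dc \<noteq> 0" "b - z \<noteq> 0" "x \<noteq> 0" "z \<noteq> 0" "b \<noteq> 0"
  shows "(z-x)*(A1*(x-z)/D)*(-g1*(x-b)*(x-z)/D)/(2*\<i>*z*x*(w^4*x*Dc/D))
     = (-(A1*g1)/(w^4*(b-z))) * ((x-z)*(xi-b))/(D*Dc) * ((z-x)*(b-z)*(b-x)/(2*\<i>*z*x*b))"
proof -
  have xi: "xi = 1/x" using assms(1,7) by (simp add: field_simps)
  have zb: "z = 1/b" using assms(2,9) by (simp add: field_simps)
  show ?thesis unfolding xi zb using assms(3-9) unfolding zb by (simp add: field_simps)
qed


lemma cis_sum_cnj: "cis t + cis (-t) = complex_of_real (2 * cos t)"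
  by (simp add: complex_eq_iff cis.code)

lemma cis_diff_cnj: "cis t - cis (-t) = 2 * \<i> * complex_of_real (sin t)"
  by (simp add: complex_eq_iff cis.code)

lemma dyn:
  fixes C dl bt :: real and x :: complex
  assumes C1: "C > 1" and r1: "cos bt * C = 1" and r2: "C^2 * cos dl = 1"
    and sd: "sin dl > 0" and sb: "sin bt > 0"
    and x1: "cmod x = 1" and h: "ori (cis (-bt)) x (cis bt) > 0"
  shows "ori (cis (-bt)) x (cis dl * Fm C (cis dl * cis dl * Fm C (cis dl * x))) > 0"
proof -
  define w where "w = cis dl"
  define b where "b = cis bt"
  define z where "z = cis (-bt)"
  define Cc where "Cc = complex_of_real C"
  define V where "V = cis dl * Fm C (cis dl * cis dl * Fm C (cis dl * x))"
  have w1: "cmod w = 1" "w \<noteq> 0" unfolding w_def by simp_all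
  have b1: "cmod b = 1" "b \<noteq> 0" unfolding b_def by simp_all
  have z1: "cmod z = 1" "z \<noteq> 0" unfolding z_def by simp_all
  have x0: "x \<noteq> 0" using x1 by auto
  have bz: "b * z = 1" unfolding b_def z_def by (simp add: cis_mult)
  have wi: "w * cis (-dl) = 1" unfolding w_def by (simp add: cis_mult)
  have cnjw: "cnj w = cis (-dl)" unfolding w_def by (simp add: cis_cnj)
  have cnjz: "cnj z = b" unfolding z_def b_def by (simp add: cis_cnj)
  have cnjx: "cnj x = 1/x" by (rule unit_cnj[OF x1])
  have cd: "C * C * cos dl = 1" using r2 by (simp add: power2_eq_square)
  have K1: "Cc*Cc*(w*w+1) = 2*w"
  proof -
    have "w*w + 1 = w * (w + cis (-dl))" using wi by (simp add: algebra_simps)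
    also have "w + cis (-dl) = complex_of_real (2 * cos dl)" unfolding w_def by (rule cis_sum_cnj)
    finally have "Cc*Cc*(w*w+1) = w * complex_of_real (2 * (C*C* cos dl))" unfolding Cc_def
      by (simp add: algebra_simps)
    then show ?thesis using cd by simp
  qed
  have K2: "Cc*(b+z) = 2"
  proof -
    have "Cc*(b+z) = complex_of_real (C * (2* cos bt))" unfolding Cc_def b_def z_def cis_sum_cnj by simp
    also have "C * (2* cos bt) = 2" using r1 by (simp add: algebra_simps)
    finally show ?thesis by simp
  qed
  have bnz: "b - z \<noteq> 0"
  proof
    assume "b - z = 0"
    then have "2 * \<i> * complex_of_real (sin bt) = 0" unfolding b_def z_def cis_diff_cnj by simp
    then show False using sb by simp
  qed
  have wx1: "cmod (w*x) = 1" using w1 x1 by (simp add: norm_mult)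
  have d1: "Cc - w*x \<noteq> 0" unfolding Cc_def using Fden[OF C1 wx1] .
  have y1: "cmod (w*w*Fm C (w*x)) = 1" using F_unit[OF C1 wx1] w1 by (simp add: norm_mult)
  have d2: "Cc - w*w*((1 - Cc*(w*x))/(Cc - w*x)) \<noteq> 0"
    using Fden[OF C1 y1] unfolding Fm_def Cc_def .
  define g1 where "g1 = w*Cc*(w*w - 1)"
  define al where "al = w*w*(Cc*Cc*w*w - 1)"
  define ep where "ep = Cc*Cc - w*w"
  define N where "N = al * x + w*Cc*(1 - w*w)"
  define D where "D = g1 * x + ep"
  have VND: "V = N / D" and Dfac: "D = (Cc - w*w*((1 - Cc*(w*x))/(Cc - w*x))) * (Cc - w*x)"
    using U_mobius[OF d1 d2] unfolding V_def N_def D_def g1_def al_def ep_def Fm_def w_def[symmetric] Cc_def[symmetric]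
    by (simp_all add: mult.assoc)
  have D0: "D \<noteq> 0" unfolding Dfac using d1 d2 by simp
  note UF = U_fix[OF K1 K2 bz]
  have Vz: "V - z = (al - z*g1)*(x - z)/D"
  proof -
    have "V - z = (N - z*D)/D" unfolding VND using D0 by (simp add: field_simps)
    also have "N - z*D = (al - z*g1)*(x - z)" using UF(2) unfolding N_def D_def al_def g1_def ep_def .
    finally show ?thesis .
  qed
  have Vx: "V - x = -g1*(x - b)*(x - z)/D"
  proof -
    have "V - x = (N - x*D)/D" unfolding VND using D0 by (simp add: field_simps)
    also have "N - x*D = -g1*(x - b)*(x - z)" using UF(3) unfolding N_def D_def al_def g1_def ep_def by simp
    finally show ?thesis .
  qed
  define Dc where "Dc = cnj D"
  have Dc_eq: "Dc = (cis (-dl)*Cc*(cis (-dl)*cis (-dl) - 1)) * (1/x) + (Cc*Cc - cis (-dl)*cis (-dl))"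
    unfolding Dc_def D_def g1_def ep_def Cc_def using cnjw cnjx by simp
  have ND: "N = w^4 * x * Dc"
  proof -
    define wi' where "wi' = cis (-dl)"
    have "N = w^4 * x * ((wi'*Cc*(wi'*wi' - 1)) * (1/x) + (Cc*Cc - wi'*wi'))"
    proof -
      have e: "w * wi' = 1" using wi unfolding wi'_def .
      have "w^4 * x * ((wi'*Cc*(wi'*wi' - 1)) * (1/x) + (Cc*Cc - wi'*wi'))
          = w^4 * ((wi'*Cc*(wi'*wi' - 1)) + (Cc*Cc - wi'*wi') * x)" using x0 by (simp add: field_simps)
      also have "\<dots> = N" unfolding N_def al_def using e by algebra
      finally show ?thesis by simp
    qed
    then show ?thesis unfolding Dc_eq wi'_def .
  qed
  have Dc0: "Dc \<noteq> 0" unfolding Dc_def using D0 by simp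
  have VDc: "V = w^4 * x * Dc / D" unfolding VND ND ..
  have V1: "cmod V = 1" unfolding V_def using F_unit[OF C1 y1] w1 by (simp add: norm_mult w_def)
  define Kc where "Kc = (-((al - z*g1)*g1)/(w^4*(b-z)))"
  have xi: "x * (1/x) = 1" using x0 by simp
  have main: "complex_of_real (ori z x V) = Kc * ((x-z)*(1/x-b))/(D*Dc) * complex_of_real (ori z x b)"
  proof -
    have "complex_of_real (ori z x V) = (z-x)*(V-z)*(V-x)/(2*\<i>*z*x*V)"
      by (rule ori_unit[OF z1(1) x1 V1])
    also have "\<dots> = (z-x)*((al - z*g1)*(x-z)/D)*(-g1*(x-b)*(x-z)/D)/(2*\<i>*z*x*(w^4*x*Dc/D))"
      unfolding Vz Vx using VDc by simp
    also have "\<dots> = Kc * ((x-z)*(1/x-b))/(D*Dc) * ((z-x)*(b-z)*(b-x)/(2*\<i>*z*x*b))"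
      unfolding Kc_def by (rule W_ident[OF xi bz w1(2) D0 Dc0 bnz x0 z1(2) b1(2)])
    also have "(z-x)*(b-z)*(b-x)/(2*\<i>*z*x*b) = complex_of_real (ori z x b)"
      by (rule ori_unit[OF z1(1) x1 b1(1), symmetric])
    finally show ?thesis .
  qed
  define wi' where "wi' = cis (-dl)"
  have e: "w * wi' = 1" using wi unfolding wi'_def .
  define Y where "Y = Cc*Cc*w*w - 1 - Cc*(w - wi')*z"
  have A1: "al - z*g1 = w*w*Y" unfolding al_def g1_def Y_def using e by algebra
  have G1: "g1 = w*w*Cc*(w - wi')" unfolding g1_def using e by algebra
  have Kc2: "Kc = -(Y*Cc*(w - wi'))/(b - z)"
    unfolding Kc_def A1 unfolding G1 using w1(2) bnz by (simp add: field_simps power4_eq_xxxx)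
  define y where "y = C^2 * cos (2*dl) - 1 - 2*C* sin dl* sin bt"
  have ww: "w*w = cis (2*dl)" unfolding w_def by (simp add: cis_mult)
  have wdiff: "w - wi' = 2 * \<i> * complex_of_real (sin dl)" unfolding w_def wi'_def by (rule cis_diff_cnj)
  have bdiff: "b - z = 2 * \<i> * complex_of_real (sin bt)" unfolding b_def z_def by (rule cis_diff_cnj)
  have Yy: "Y = complex_of_real y"
  proof -
    have "Y = Cc*Cc*(w*w) - 1 - Cc*(w - wi')*z" unfolding Y_def by (simp add: algebra_simps)
    also have "\<dots> = Cc*Cc*cis (2*dl) - 1 - Cc*(2 * \<i> * complex_of_real (sin dl))*cis (-bt)"
      unfolding ww wdiff z_def ..
    also have "\<dots> = complex_of_real y"
    proof -
      have im: "C^2 * sin (2*dl) - 2*C* sin dl* cos bt = 0"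
      proof -
        have "C^2 * sin (2*dl) = 2 * sin dl * (C^2 * cos dl)" unfolding sin_double by (simp add: algebra_simps)
        also have "\<dots> = 2 * sin dl" using r2 by simp
        also have "2 * sin dl = 2 * sin dl * (cos bt * C)" using r1 by simp
        finally show ?thesis by (simp add: algebra_simps)
      qed
      show ?thesis unfolding Cc_def y_def using im
        by (simp add: complex_eq_iff cis.code power2_eq_square algebra_simps)
    qed
    finally show ?thesis .
  qed
  define kap where "kap = - y * C * sin dl / sin bt"
  have Kck: "Kc = complex_of_real kap"
    unfolding Kc2 Yy wdiff bdiff kap_def Cc_def using sb by (simp add: field_simps)
  have yneg: "y < 0"
  proof -
    have c2: "C^2 * cos (2*dl) = 2 * cos dl - C^2"
    proof -
      have "C^2 * cos (2*dl) = 2 * (C^2 * cos dl) * cos dl - C^2" unfolding cos_double_cos by (simp add: algebra_simps power2_eq_square)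
      then show ?thesis using r2 by simp
    qed
    have "C^2 > 1" using C1 by (simp add: power2_eq_square less_1_mult)
    moreover have "cos dl \<le> 1" by simp
    moreover have "2*C* sin dl* sin bt > 0" using C1 sd sb by simp
    ultimately show ?thesis unfolding y_def c2 by linarith
  qed
  have kap0: "kap > 0"
  proof -
    have yp: "-y > 0" using yneg by simp
    have C0: "C > 0" using C1 by simp
    have "0 < (-y) * C * sin dl" by (rule mult_pos_pos[OF mult_pos_pos[OF yp C0] sd])
    then have "0 < (-y) * C * sin dl / sin bt" using sb by (rule divide_pos_pos)
    then show ?thesis unfolding kap_def by simp
  qed
  have n1: "(x-z)*(1/x-b) = complex_of_real ((cmod (x-z))^2)"
    using complex_norm_square[of "x - z"] cnjx cnjz by simp
  have n2: "D*Dc = complex_of_real ((cmod D)^2)" unfolding Dc_def using complex_norm_square[of D] by simp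
  have xz: "x \<noteq> z" using h unfolding z_def ori_def by auto
  have "complex_of_real (ori z x V) = complex_of_real (kap * (cmod (x-z))^2 / (cmod D)^2 * ori z x b)"
    unfolding main Kck n1 n2 by simp
  then have "ori z x V = kap * (cmod (x-z))^2 / (cmod D)^2 * ori z x b" using of_real_eq_iff by blast
  moreover have "kap * (cmod (x-z))^2 / (cmod D)^2 > 0" using kap0 xz D0 by simp
  moreover have "ori z x b > 0" using h unfolding z_def b_def .
  ultimately have "ori z x V > 0" by (metis mult_pos_pos)
  then show ?thesis unfolding z_def V_def .
qed



lemma basics:
  assumes g: "g \<ge> 2"
  shows "0 < delta g" "delta g \<le> pi/6" "0 < cos (delta g)" "cos (delta g) < 1" "0 < sin (delta g)"
    "Cdist g > 1" "cos (beta g) * Cdist g = 1" "(Cdist g)^2 * cos (delta g) = 1"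
    "sin (beta g) > 0" "Rrad g > 0" "2 * real g * delta g = pi/2 + delta g"
    "(cos (beta g))^2 = cos (delta g)"
proof -
  have N: "real_of_int (Nsides g) = 8 * real g - 4" unfolding Nsides_def by simp
  have N12: "8 * real g - 4 \<ge> 12" using g by simp
  have d: "delta g = 2*pi / (8 * real g - 4)" unfolding delta_def N ..
  show d0: "0 < delta g" unfolding d using N12 by simp
  have "2*pi / (8 * real g - 4) \<le> 2*pi / 12" using N12 by (intro divide_left_mono) auto
  then show d6: "delta g \<le> pi/6" unfolding d by simp
  show c0: "0 < cos (delta g)" using d0 d6 by (intro cos_gt_zero_pi) auto
  show c1: "cos (delta g) < 1" using cos_monotone_0_pi[of 0 "delta g"] d0 d6 by simp
  show "0 < sin (delta g)" using d0 d6 by (intro sin_gt_zero) auto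
  have sq0: "0 < sqrt (cos (delta g))" "sqrt (cos (delta g)) < 1" using c0 c1 by auto
  have cb: "cos (beta g) = sqrt (cos (delta g))" unfolding beta_def using sq0 by (simp add: cos_arccos_abs)
  show "(cos (beta g))^2 = cos (delta g)" unfolding cb using c0 by simp
  show C1: "Cdist g > 1" unfolding Cdist_def using sq0 by simp
  show "cos (beta g) * Cdist g = 1" unfolding cb Cdist_def using sq0 by simp
  show "(Cdist g)^2 * cos (delta g) = 1" unfolding Cdist_def using c0 by (simp add: power_divide)
  show "sin (beta g) > 0" unfolding beta_def using arccos_lt_bounded[of "sqrt (cos (delta g))"] sq0
    by (intro sin_gt_zero) auto
  show "Rrad g > 0" unfolding Rrad_def using C1 less_1_mult[of "Cdist g" "Cdist g"] by (simp add: power2_eq_square)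
  have nz: "8 * real g - 4 \<noteq> 0" using N12 by simp
  show "2 * real g * delta g = pi/2 + delta g" unfolding d using nz by (simp add: field_simps; simp add: algebra_simps)
qed

lemma Tm_even_aux:
  fixes z w e :: complex and C R :: real
  assumes "R \<noteq> 0" "w \<noteq> 0" "e \<noteq> 0" "cnj w = 1/w" "cnj e = 1/e" "complex_of_real C * e - z \<noteq> 0"
  shows "(let c = \<i> * w / complex_of_real R; a = complex_of_real C * (w*w/e) * cnj c
          in (a * z + c) / (cnj c * z + cnj a)) = (w*w/e) * Fm C (z/e)"
proof -
  have c1: "cnj (\<i> * w / complex_of_real R) = - \<i> / (w * complex_of_real R)" using assms(4) by simp
  have c2: "cnj (complex_of_real C * (w*w/e) * (- \<i> / (w * complex_of_real R))) = \<i> * complex_of_real C * e / (w * complex_of_real R)"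
    by (simp add: assms(4,5))
  show ?thesis unfolding Let_def c1 c2 Fm_def using assms(1,2,3,6) by (simp add: field_simps)
qed

lemma Tm_odd_aux:
  fixes z w e :: complex and C R :: real
  assumes "R \<noteq> 0" "w \<noteq> 0" "e \<noteq> 0" "cnj w = 1/w" "cnj e = 1/e" "complex_of_real C * e - z \<noteq> 0"
  shows "(let c = \<i> * (\<i> * w) / complex_of_real R; a = complex_of_real C * (-(w*w/e)) * cnj c
          in (a * z + c) / (cnj c * z + cnj a)) = -((w*w/e) * Fm C (z/e))"
proof -
  have c1: "cnj (\<i> * (\<i> * w) / complex_of_real R) = - 1 / (w * complex_of_real R)" using assms(4) by simp
  have c2: "cnj (complex_of_real C * (-(w*w/e)) * (- 1 / (w * complex_of_real R))) = complex_of_real C * e / (w * complex_of_real R)"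
    by (simp add: assms(4,5))
  show ?thesis unfolding Let_def c1 c2 Fm_def using assms(1,2,3,6) by (simp add: field_simps)
qed


lemma cis_inv: "1 / cis x = cis (-x)" by (metis cis_divide cis_zero diff_0)

lemma Tm_formula:
  assumes g: "g \<ge> 2" and z: "cmod z = 1"
  shows "Tm g i z = (if even i then 1 else -1) *
     ((cis (delta g) * cis (delta g) / cis (real_of_int i * delta g)) * Fm (Cdist g) (z / cis (real_of_int i * delta g)))"
proof -
  note B = basics[OF g]
  define w where "w = cis (delta g)"
  define e where "e = cis (real_of_int i * delta g)"
  have w0: "w \<noteq> 0" "cnj w = 1/w" unfolding w_def by (simp_all add: cis_cnj cis_inv)
  have e0: "e \<noteq> 0" "cnj e = 1/e" unfolding e_def by (simp_all add: cis_cnj cis_inv)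
  have R0: "Rrad g \<noteq> 0" using B by simp
  have ze: "cmod (z/e) = 1" using z unfolding e_def by (simp add: norm_divide)
  have nz: "complex_of_real (Cdist g) * e - z \<noteq> 0"
  proof
    assume "complex_of_real (Cdist g) * e - z = 0"
    then have "complex_of_real (Cdist g) - z/e = 0" using e0 by (simp add: field_simps)
    then show False using Fden[of "Cdist g" "z/e"] ze B by simp
  qed
  show ?thesis
  proof (cases "even i")
    case True
    have s: "sigma g i = 2 - i" unfolding sigma_def using True by simp
    have th: "cis ((alpha g i + alpha g (sigma g i))/2) = w"
      unfolding s alpha_def w_def by (simp add: algebra_simps)
    have as: "cis (alpha g (sigma g i)) = w*w/e"
      unfolding s alpha_def w_def e_def by (simp add: cis_mult cis_divide algebra_simps)
    have "Tm g i z = (complex_of_real (Cdist g) * (w*w/e) * cnj (\<i> * w / complex_of_real (Rrad g)) * z + \<i> * w / complex_of_real (Rrad g)) /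
       (cnj (\<i> * w / complex_of_real (Rrad g)) * z + cnj (complex_of_real (Cdist g) * (w*w/e) * cnj (\<i> * w / complex_of_real (Rrad g))))"
      unfolding Tm_def Let_def th as ..
    also have "\<dots> = (w*w/e) * Fm (Cdist g) (z/e)"
      using Tm_even_aux[OF R0 w0(1) e0(1) w0(2) e0(2) nz] unfolding Let_def .
    finally show ?thesis using True by (simp add: w_def e_def)
  next
    case False
    have s: "sigma g i = 4 * int g - i" unfolding sigma_def using False by simp
    have th: "cis ((alpha g i + alpha g (sigma g i))/2) = \<i> * w"
    proof -
      have h: "(alpha g i + alpha g (sigma g i))/2 = pi/2 + delta g"
        unfolding s alpha_def using B(11) by (simp add: algebra_simps)
      show ?thesis unfolding h w_def by (simp add: complex_eq_iff cos_add sin_add)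
    qed
    have as: "cis (alpha g (sigma g i)) = -(w*w/e)"
    proof -
      have h: "alpha g (sigma g i) = pi + 2 * delta g - real_of_int i * delta g"
        unfolding s alpha_def using B(11) by (simp add: algebra_simps)
      have h2: "pi + 2 * delta g - real_of_int i * delta g = pi + (delta g + delta g - real_of_int i * delta g)" by simp
      have "cis (pi + y) = - cis y" for y by (simp add: complex_eq_iff cos_add sin_add)
      then show ?thesis unfolding w_def e_def h h2 by (simp add: cis_mult cis_divide)
    qed
    have "Tm g i z = (complex_of_real (Cdist g) * (-(w*w/e)) * cnj (\<i> * (\<i> * w) / complex_of_real (Rrad g)) * z + \<i> * (\<i> * w) / complex_of_real (Rrad g)) /
       (cnj (\<i> * (\<i> * w) / complex_of_real (Rrad g)) * z + cnj (complex_of_real (Cdist g) * (-(w*w/e)) * cnj (\<i> * (\<i> * w) / complex_of_real (Rrad g))))"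
      unfolding Tm_def Let_def th as ..
    also have "\<dots> = -((w*w/e) * Fm (Cdist g) (z/e))"
      using Tm_odd_aux[OF R0 w0(1) e0(1) w0(2) e0(2) nz] unfolding Let_def .
    finally show ?thesis using False by (simp add: w_def e_def)
  qed
qed




lemma Ib: assumes C1: "C > 1" and r1: "cos bt * C = 1" shows "Fm C (cis bt) = cis (-bt)"
proof -
  have d: "complex_of_real C - cis bt \<noteq> 0" using Fden[OF C1] by simp
  have "1 - complex_of_real C * cis bt = cis (-bt) * (complex_of_real C - cis bt)"
    using r1 by (simp add: complex_eq_iff cis.code algebra_simps)
  then show ?thesis unfolding Fm_def using d by (simp add: field_simps)
qed

lemma Iwb: assumes C1: "C > 1" and r1: "cos bt * C = 1" and r2: "C^2 * cos dl = 1"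
  shows "Fm C (cis (dl - bt)) = cis (-dl-bt)"
proof -
  have d: "complex_of_real C - cis (dl-bt) \<noteq> 0" using Fden[OF C1] by simp
  have cc: "C * cos dl = cos bt"
  proof -
    have "C * cos dl = C * cos dl * (cos bt * C)" using r1 by simp
    also have "\<dots> = (C^2 * cos dl) * cos bt" by (simp add: power2_eq_square algebra_simps)
    finally show ?thesis using r2 by simp
  qed
  have s1: "sin bt ^2 = 1 - cos bt ^2" by (simp add: sin_squared_eq)
  have re: "1 - C * cos (dl - bt) = C * cos (-dl-bt) - cos (2*bt)"
  proof -
    have "C * cos (-dl-bt) + C * cos (dl - bt) = 2 * (C * cos dl) * cos bt"
      by (simp add: cos_diff cos_add algebra_simps)
    also have "\<dots> = 2 * cos bt ^2" using cc by (simp add: power2_eq_square)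
    also have "\<dots> = 1 + cos (2*bt)" by (simp add: cos_double_cos)
    finally show ?thesis by simp
  qed
  have im: "- C * sin (dl - bt) = C * sin (-dl-bt) + sin (2*bt)"
  proof -
    have "C * sin (dl - bt) - C * sin (dl+bt) = - 2 * (C * cos dl) * sin bt"
      by (simp add: sin_diff sin_add algebra_simps)
    also have "\<dots> = - sin (2*bt)" using cc by (simp add: sin_double)
    moreover have "sin (-dl-bt) = - sin (dl+bt)"
    proof -
      have "-dl-bt = -(dl+bt)" by simp
      then show ?thesis by (simp only: sin_minus)
    qed
    ultimately show ?thesis by (simp add: algebra_simps)
  qed
  have "1 - complex_of_real C * cis (dl-bt) = cis (-dl-bt) * (complex_of_real C - cis (dl-bt))"
  proof -
    have "cis (-dl-bt) * (complex_of_real C - cis (dl-bt)) = complex_of_real C * cis (-dl-bt) - cis (-2*bt)"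
      by (simp add: algebra_simps cis_mult)
    also have "\<dots> = 1 - complex_of_real C * cis (dl-bt)"
      using re im by (simp add: complex_eq_iff cis.code)
    finally show ?thesis by simp
  qed
  then show ?thesis unfolding Fm_def using d by (simp add: field_simps)
qed


lemma O2:
  assumes C1: "C > 1" and r1: "cos bt * C = 1" and r2: "C^2 * cos dl = 1"
    and d0: "0 < dl" "dl < pi" and b0: "0 < bt" "bt < pi"
  shows "ori (cis (-bt)) (cis (bt-dl)) (cis bt) > 0"
proof -
  have cb: "cos bt = 1 / C" using r1 C1 by (simp add: field_simps)
  have cbp: "cos bt > 0" unfolding cb using C1 by simp
  have sq: "(cos bt)^2 = cos dl" unfolding cb using r2 C1 by (simp add: field_simps power2_eq_square)
  have sh: "sin (dl/2) > 0" using d0 by (intro sin_gt_zero) auto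
  have ch: "cos (dl/2) > 0" using d0 by (intro cos_gt_zero_pi) auto
  have "cos dl = 2 * (cos (dl/2))^2 - 1" using cos_double_cos[of "dl/2"] by simp
  moreover have "(cos (dl/2))^2 < 1"
  proof -
    have "(sin (dl/2))^2 > 0" using sh by simp
    then show ?thesis using cos_squared_eq[of "dl/2"] by linarith
  qed
  ultimately have "(cos bt)^2 < (cos (dl/2))^2" using sq by simp
  then have lt: "cos bt < cos (dl/2)" by (rule power2_less_imp_less[OF _ less_imp_le[OF ch]])
  have bt2: "dl/2 < bt"
  proof (rule ccontr)
    assume "\<not> dl/2 < bt"
    then have "cos (dl/2) \<le> cos bt" using b0 d0 by (intro cos_monotone_0_pi_le) auto
    then show False using lt by simp
  qed
  have "ori (cis (-bt)) (cis (bt-dl)) (cis bt) = 4 * sin ((bt - -bt)/2) * sin ((bt - (bt-dl))/2) * sin ((bt - dl - -bt)/2)"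
    by (rule ori_cis)
  also have "\<dots> = 4 * sin bt * sin (dl/2) * sin (bt - dl/2)"
  proof -
    have q: "(bt - -bt)/2 = bt" "(bt - (bt-dl))/2 = dl/2" "(bt - dl - -bt)/2 = bt - dl/2" by simp_all
    show ?thesis by (simp only: q)
  qed
  finally have e: "ori (cis (-bt)) (cis (bt-dl)) (cis bt) = 4 * sin bt * sin (dl/2) * sin (bt - dl/2)" .
  have "sin bt > 0" using b0 by (intro sin_gt_zero) auto
  moreover have "sin (bt - dl/2) > 0" using bt2 b0 d0 by (intro sin_gt_zero) auto
  ultimately show ?thesis unfolding e using sh by simp
qed


lemma coreN1:
  fixes C dl bt :: real and x :: complex
  assumes C1: "C > 1" and r1: "cos bt * C = 1" and r2: "C^2 * cos dl = 1"
    and d0: "0 < dl" "dl < pi" and b0: "0 < bt" "bt < pi"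
    and x1: "cmod x = 1"
    and H1: "ori (cis (-bt)) x (cis (bt-dl)) > 0"
    and H2: "ori (cis (-dl-bt)) (Fm C (cis dl * x)) (cis (bt-2*dl)) > 0"
  shows "ori x (cis dl * Fm C (cis dl * cis dl * Fm C (cis dl * x))) (cis (dl-bt)) > 0"
proof -
  have sd: "sin dl > 0" using d0 by (intro sin_gt_zero) auto
  have sb: "sin bt > 0" using b0 by (intro sin_gt_zero) auto
  define y where "y = Fm C (cis dl * x)"
  define V where "V = cis dl * Fm C (cis dl * cis dl * y)"
  have y1: "cmod y = 1" unfolding y_def using F_unit[OF C1] x1 by (simp add: norm_mult)
  have w2: "cmod (cis dl * cis dl) = 1" by (simp add: norm_mult)
  have V1: "cmod V = 1" unfolding V_def using F_unit[OF C1] y1 by (simp add: norm_mult)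
  have p1: "(cis dl * cis dl) * cis (-dl-bt) = cis (dl-bt)" by (simp add: cis_mult algebra_simps)
  have p2: "(cis dl * cis dl) * cis (bt-2*dl) = cis bt" by (simp add: cis_mult algebra_simps)
  have G2a: "ori (cis (dl-bt)) (cis dl * cis dl * y) (cis bt) > 0"
    using H2 ori_rot[OF w2, of "cis (-dl-bt)" y "cis (bt-2*dl)"] unfolding p1 p2 y_def by simp
  have G2b: "ori (cis (-dl-bt)) (Fm C (cis dl * cis dl * y)) (cis (-bt)) > 0"
    using ori_F[OF C1 _ _ _ G2a] y1 w2 unfolding Iwb[OF C1 r1 r2] Ib[OF C1 r1] by (simp add: norm_mult)
  have p3: "cis dl * cis (-dl-bt) = cis (-bt)" by (simp add: cis_mult)
  have p4: "cis dl * cis (-bt) = cis (dl-bt)" by (simp add: cis_mult)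
  have G2: "ori (cis (-bt)) V (cis (dl-bt)) > 0"
    using G2b ori_rot[of "cis dl" "cis (-dl-bt)" "Fm C (cis dl * cis dl * y)" "cis (-bt)"]
    unfolding p3 p4 V_def by simp
  have G1a: "ori (cis (-bt)) x (cis bt) > 0"
    using cyc1[of "cis (-bt)" x "cis (bt-dl)" "cis bt"] H1 O2[OF C1 r1 r2 d0 b0] x1 by simp
  have G1: "ori (cis (-bt)) x V > 0"
    using dyn[OF C1 r1 r2 sd sb x1 G1a] unfolding V_def y_def by simp
  show ?thesis using cyc4[of "cis (-bt)" x V "cis (dl-bt)"] G1 G2 x1 V1 unfolding V_def y_def by simp
qed


lemma ori_rev: "ori r q p = - ori p q r"
  unfolding ori_def by (simp add: algebra_simps)

lemma ori_cnj_rev: "ori (cnj p) (cnj q) (cnj r) = ori r q p"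
  using ori_cnj[of p q r] ori_rev[of r q p] by simp

lemma F_cnj: "Fm C (cnj u) = cnj (Fm C u)"
  unfolding Fm_def by simp

lemma coreN2:
  fixes C dl bt :: real and u :: complex
  assumes C1: "C > 1" and r1: "cos bt * C = 1" and r2: "C^2 * cos dl = 1"
    and d0: "0 < dl" "dl < pi" and b0: "0 < bt" "bt < pi"
    and u1: "cmod u = 1"
    and H1: "ori (cis (-bt)) u (cis (bt-dl)) > 0"
    and H2: "ori (cis (2*dl-bt)) (Fm C u) (cis (dl+bt)) > 0"
  shows "ori (cis (bt-2*dl)) (cis (-2*dl) * Fm C (cis (-2*dl) * Fm C u)) u > 0"
proof -
  define x where "x = cis (-dl) * cnj u"
  have x1: "cmod x = 1" unfolding x_def using u1 by (simp add: norm_mult)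
  have wx: "cis dl * x = cnj u" unfolding x_def by (simp add: cis_mult mult.assoc[symmetric])
  have c1: "cis dl * cis (-bt) = cnj (cis (bt-dl))" by (simp add: cis_mult cis_cnj)
  have c2: "cis dl * cis (bt-dl) = cnj (cis (-bt))" by (simp add: cis_mult cis_cnj)
  have H1x: "ori (cis (-bt)) x (cis (bt-dl)) > 0"
    using ori_rot[of "cis dl" "cis (-bt)" x "cis (bt-dl)"] H1
    unfolding wx c1 c2 ori_cnj_rev by simp
  have c3: "cis (-dl-bt) = cnj (cis (dl+bt))" by (simp add: cis_cnj)
  have c4: "cis (bt-2*dl) = cnj (cis (2*dl-bt))" by (simp add: cis_cnj)
  have H2x: "ori (cis (-dl-bt)) (Fm C (cis dl * x)) (cis (bt-2*dl)) > 0"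
    unfolding wx F_cnj c3 c4 ori_cnj_rev using H2 .
  note N = coreN1[OF C1 r1 r2 d0 b0 x1 H1x H2x]
  define Q where "Q = Fm C (cis (-2*dl) * Fm C u)"
  have e1: "cis dl * cis dl * Fm C (cis dl * x) = cnj (cis (-2*dl) * Fm C u)"
    unfolding wx F_cnj by (simp add: cis_cnj cis_mult)
  have e2: "cis dl * Fm C (cis dl * cis dl * Fm C (cis dl * x)) = cnj (cis (-dl) * Q)"
    unfolding e1 F_cnj Q_def by (simp add: cis_cnj)
  have e3: "x = cnj (cis dl * u)" unfolding x_def by (simp add: cis_cnj)
  have e4: "cis (dl-bt) = cnj (cis (bt-dl))" by (simp add: cis_cnj)
  have N2: "ori (cis (bt-dl)) (cis (-dl) * Q) (cis dl * u) > 0"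
    using N unfolding e2 unfolding e3 e4 ori_cnj_rev .
  have e5: "cis dl * cis (bt-2*dl) = cis (bt-dl)" by (simp add: cis_mult)
  have e6: "cis dl * (cis (-2*dl) * Q) = cis (-dl) * Q" by (simp add: cis_mult mult.assoc[symmetric])
  have "ori (cis (bt-2*dl)) (cis (-2*dl) * Q) u = ori (cis (bt-dl)) (cis (-dl) * Q) (cis dl * u)"
    using ori_rot[of "cis dl" "cis (bt-2*dl)" "cis (-2*dl) * Q" u] unfolding e5 e6 by simp
  then show ?thesis using N2 unfolding Q_def by simp
qed




lemma cis_pi_add: "cis (pi + t) = - cis t"
  by (simp add: complex_eq_iff cis.code)

lemma part1_norm:
  fixes g :: nat and j :: int and u :: complex
  assumes g: "g \<ge> 2" and u1: "cmod u = 1"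
  defines "d \<equiv> delta g" and "th \<equiv> theta g (j-1)"
  shows "\<exists>s. (s = 1 \<or> s = -1) \<and>
     Tm g (j-1) (cis (real_of_int j * d) * u) = s * cis ((3 - real_of_int j) * d) * Fm (Cdist g) (cis d * u) \<and>
     Pt g th = s * cis ((3 - real_of_int j) * d) * cis (-d - beta g) \<and>
     Qt g th = s * cis ((3 - real_of_int j) * d) * cis (beta g - 2*d) \<and>
     Tm g (th - 1) (Tm g (j-1) (cis (real_of_int j * d) * u))
       = cis (real_of_int j * d) * (cis d * Fm (Cdist g) (cis d * cis d * Fm (Cdist g) (cis d * u)))"
proof -
  note B = basics[OF g]
  have key: "4 * real g * d = pi + 2 * d" unfolding d_def using B(11) by linarith
  have z1: "cmod (cis (real_of_int j * d) * u) = 1" using u1 by (simp add: norm_mult)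
  have T1: "Tm g (j-1) (cis (real_of_int j * d) * u) = (if even (j-1) then 1 else -1) *
      (cis d * cis d / cis (real_of_int (j-1) * d) * Fm (Cdist g) (cis (real_of_int j * d) * u / cis (real_of_int (j-1) * d)))"
    using Tm_formula[OF g z1, of "j-1"] unfolding d_def by simp
  have a1: "cis d * cis d / cis (real_of_int (j-1) * d) = cis ((3 - real_of_int j) * d)"
    by (simp add: cis_mult cis_divide algebra_simps)
  have a2: "cis (real_of_int j * d) * u / cis (real_of_int (j-1) * d) = cis d * u"
  proof -
    have q: "cis (real_of_int j * d) = cis d * cis (real_of_int (j-1) * d)" by (simp add: cis_mult algebra_simps)
    show ?thesis unfolding q by simp
  qed
  show ?thesis
  proof (cases "even (j-1)")
    case True
    have ths: "th = 2 - j" unfolding th_def theta_def sigma_def using True by simp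
    define T where "T = cis ((3 - real_of_int j) * d) * Fm (Cdist g) (cis d * u)"
    have TT: "Tm g (j-1) (cis (real_of_int j * d) * u) = T" unfolding T1 a1 a2 T_def using True by simp
    have T1': "cmod T = 1" unfolding T_def using F_unit[OF B(6)] u1 by (simp add: norm_mult)
    have T2: "Tm g (th-1) T = (if even (th-1) then 1 else -1) *
      (cis d * cis d / cis (real_of_int (th-1) * d) * Fm (Cdist g) (T / cis (real_of_int (th-1) * d)))"
      using Tm_formula[OF g T1', of "th-1"] unfolding d_def by simp
    have ev: "even (th - 1)" unfolding ths using True by simp
    have b1: "cis d * cis d / cis (real_of_int (th-1) * d) = cis (real_of_int j * d) * cis d"
      unfolding ths by (simp add: cis_mult cis_divide algebra_simps)
    have b2: "T / cis (real_of_int (th-1) * d) = cis d * cis d * Fm (Cdist g) (cis d * u)"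
    proof -
      have q: "cis ((3 - real_of_int j) * d) = cis d * cis d * cis (real_of_int (th-1) * d)"
        unfolding ths by (simp add: cis_mult algebra_simps)
      show ?thesis unfolding T_def q by simp
    qed
    have P: "Pt g th = cis ((3 - real_of_int j) * d) * cis (-d - beta g)"
      unfolding Pt_def alpha_def ths d_def by (simp add: cis_mult algebra_simps)
    have Q: "Qt g th = cis ((3 - real_of_int j) * d) * cis (beta g - 2*d)"
      unfolding Qt_def alpha_def ths d_def by (simp add: cis_mult algebra_simps)
    have fin: "Tm g (th - 1) (Tm g (j-1) (cis (real_of_int j * d) * u))
       = cis (real_of_int j * d) * (cis d * Fm (Cdist g) (cis d * cis d * Fm (Cdist g) (cis d * u)))"
      unfolding TT T2 b1 b2 using ev by (simp add: mult.assoc)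
    show ?thesis
      apply (rule exI[of _ 1])
      apply (intro conjI)
      subgoal by simp
      subgoal unfolding TT T_def by simp
      subgoal unfolding P by simp
      subgoal unfolding Q by simp
      subgoal unfolding fin ..
      done
  next
    case False
    have ths: "th = 4 * int g - j" unfolding th_def theta_def sigma_def using False by simp
    define T where "T = - cis ((3 - real_of_int j) * d) * Fm (Cdist g) (cis d * u)"
    have TT: "Tm g (j-1) (cis (real_of_int j * d) * u) = T" unfolding T1 a1 a2 T_def using False by simp
    have T1': "cmod T = 1" unfolding T_def using F_unit[OF B(6)] u1 by (simp add: norm_mult)
    have T2: "Tm g (th-1) T = (if even (th-1) then 1 else -1) *
      (cis d * cis d / cis (real_of_int (th-1) * d) * Fm (Cdist g) (T / cis (real_of_int (th-1) * d)))"
      using Tm_formula[OF g T1', of "th-1"] unfolding d_def by simp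
    have ev: "odd (th - 1)" unfolding ths using False by simp
    have q: "cis (real_of_int (th-1) * d) = - cis ((1 - real_of_int j) * d)"
    proof -
      have "real_of_int (th-1) * d = pi + (1 - real_of_int j) * d"
        unfolding ths using key by (simp add: algebra_simps)
      then show ?thesis by (simp only: cis_pi_add)
    qed
    have b1: "cis d * cis d / cis (real_of_int (th-1) * d) = - (cis (real_of_int j * d) * cis d)"
    proof -
      have q2: "cis d * cis d = cis (real_of_int j * d) * cis d * cis ((1 - real_of_int j) * d)"
        by (simp add: cis_mult algebra_simps)
      show ?thesis unfolding q q2 by simp
    qed
    have b2: "T / cis (real_of_int (th-1) * d) = cis d * cis d * Fm (Cdist g) (cis d * u)"
    proof -
      have q3: "cis ((3 - real_of_int j) * d) = cis d * cis d * cis ((1 - real_of_int j) * d)"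
        by (simp add: cis_mult algebra_simps)
      show ?thesis unfolding q T_def q3 by simp
    qed
    have P: "Pt g th = - cis ((3 - real_of_int j) * d) * cis (-d - beta g)"
    proof -
      have "alpha g th - beta g = pi + ((2 - real_of_int j) * d - beta g)"
        unfolding alpha_def ths d_def[symmetric] using key by (simp add: algebra_simps)
      then have "Pt g th = - cis ((2 - real_of_int j) * d - beta g)" unfolding Pt_def by (simp only: cis_pi_add)
      moreover have "cis ((2 - real_of_int j) * d - beta g) = cis ((3 - real_of_int j) * d) * cis (-d - beta g)"
        by (simp add: cis_mult algebra_simps)
      ultimately show ?thesis by simp
    qed
    have Q: "Qt g th = - cis ((3 - real_of_int j) * d) * cis (beta g - 2*d)"
    proof -
      have "alpha g (th - 1) + beta g = pi + ((1 - real_of_int j) * d + beta g)"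
        unfolding alpha_def ths d_def[symmetric] using key by (simp add: algebra_simps)
      then have "Qt g th = - cis ((1 - real_of_int j) * d + beta g)" unfolding Qt_def by (simp only: cis_pi_add)
      moreover have "cis ((1 - real_of_int j) * d + beta g) = cis ((3 - real_of_int j) * d) * cis (beta g - 2*d)"
        by (simp add: cis_mult algebra_simps)
      ultimately show ?thesis by simp
    qed
    have fin: "Tm g (th - 1) (Tm g (j-1) (cis (real_of_int j * d) * u))
       = cis (real_of_int j * d) * (cis d * Fm (Cdist g) (cis d * cis d * Fm (Cdist g) (cis d * u)))"
      unfolding TT T2 b1 b2 using ev by (simp add: mult.assoc)
    show ?thesis
      apply (rule exI[of _ "-1"])
      apply (intro conjI)
      subgoal by simp
      subgoal unfolding TT T_def by simp
      subgoal unfolding P by simp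
      subgoal unfolding Q by simp
      subgoal unfolding fin ..
      done
  qed
qed


lemma part2_norm:
  fixes g :: nat and j :: int and u :: complex
  assumes g: "g \<ge> 2" and u1: "cmod u = 1"
  defines "d \<equiv> delta g" and "r \<equiv> rho g j + 1"
  shows "\<exists>s. (s = 1 \<or> s = -1) \<and>
     Tm g j (cis (real_of_int j * d) * u) = s * cis ((2 - real_of_int j) * d) * Fm (Cdist g) u \<and>
     Pt g r = s * cis ((2 - real_of_int j) * d) * cis (2*d - beta g) \<and>
     Qt g r = s * cis ((2 - real_of_int j) * d) * cis (d + beta g) \<and>
     Tm g r (Tm g j (cis (real_of_int j * d) * u))
       = cis (real_of_int j * d) * (cis (-2*d) * Fm (Cdist g) (cis (-2*d) * Fm (Cdist g) u))"
proof -
  note B = basics[OF g]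
  have key: "4 * real g * d = pi + 2 * d" unfolding d_def using B(11) by linarith
  have z1: "cmod (cis (real_of_int j * d) * u) = 1" using u1 by (simp add: norm_mult)
  have T1: "Tm g j (cis (real_of_int j * d) * u) = (if even j then 1 else -1) *
      (cis d * cis d / cis (real_of_int j * d) * Fm (Cdist g) (cis (real_of_int j * d) * u / cis (real_of_int j * d)))"
    using Tm_formula[OF g z1, of j] unfolding d_def by simp
  have a1: "cis d * cis d / cis (real_of_int j * d) = cis ((2 - real_of_int j) * d)"
  proof -
    have q: "cis d * cis d = cis ((2 - real_of_int j) * d) * cis (real_of_int j * d)" by (simp add: cis_mult algebra_simps)
    show ?thesis unfolding q by simp
  qed
  have a2: "cis (real_of_int j * d) * u / cis (real_of_int j * d) = u" by simp
  have fin0: "cis d * cis d / cis ((4 - real_of_int j) * d) = cis (real_of_int j * d) * cis (-2*d)"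
  proof -
    have q: "cis d * cis d = cis (real_of_int j * d) * cis (-2*d) * cis ((4 - real_of_int j) * d)" by (simp add: cis_mult algebra_simps)
    show ?thesis unfolding q by simp
  qed
  have fin1: "cis ((2 - real_of_int j) * d) * Fm (Cdist g) u / cis ((4 - real_of_int j) * d) = cis (-2*d) * Fm (Cdist g) u"
  proof -
    have q: "cis ((2 - real_of_int j) * d) = cis (-2*d) * cis ((4 - real_of_int j) * d)" by (simp add: cis_mult algebra_simps)
    show ?thesis unfolding q by simp
  qed
  show ?thesis
  proof (cases "even j")
    case True
    have rs: "r = 4 - j" unfolding r_def rho_def sigma_def using True by simp
    define T where "T = cis ((2 - real_of_int j) * d) * Fm (Cdist g) u"
    have TT: "Tm g j (cis (real_of_int j * d) * u) = T" unfolding T1 a1 a2 T_def using True by simp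
    have T1': "cmod T = 1" unfolding T_def using F_unit[OF B(6)] u1 by (simp add: norm_mult)
    have T2: "Tm g r T = (if even r then 1 else -1) *
      (cis d * cis d / cis (real_of_int r * d) * Fm (Cdist g) (T / cis (real_of_int r * d)))"
      using Tm_formula[OF g T1', of r] unfolding d_def by simp
    have ev: "even r" unfolding rs using True by simp
    have cr: "cis (real_of_int r * d) = cis ((4 - real_of_int j) * d)" unfolding rs by simp
    have fin: "Tm g r (Tm g j (cis (real_of_int j * d) * u))
       = cis (real_of_int j * d) * (cis (-2*d) * Fm (Cdist g) (cis (-2*d) * Fm (Cdist g) u))"
      unfolding TT T2 cr fin0 unfolding T_def fin1 using ev by (simp add: mult.assoc)
    have P: "Pt g r = cis ((2 - real_of_int j) * d) * cis (2*d - beta g)"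
      unfolding Pt_def alpha_def rs d_def by (simp add: cis_mult algebra_simps)
    have Q: "Qt g r = cis ((2 - real_of_int j) * d) * cis (d + beta g)"
      unfolding Qt_def alpha_def rs d_def by (simp add: cis_mult algebra_simps)
    show ?thesis
      apply (rule exI[of _ 1])
      apply (intro conjI)
      subgoal by simp
      subgoal unfolding TT T_def by simp
      subgoal unfolding P by simp
      subgoal unfolding Q by simp
      subgoal unfolding fin ..
      done
  next
    case False
    have rs: "r = 4 * int g - j + 2" unfolding r_def rho_def sigma_def using False by simp
    define T where "T = - cis ((2 - real_of_int j) * d) * Fm (Cdist g) u"
    have TT: "Tm g j (cis (real_of_int j * d) * u) = T" unfolding T1 a1 a2 T_def using False by simp
    have T1': "cmod T = 1" unfolding T_def using F_unit[OF B(6)] u1 by (simp add: norm_mult)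
    have T2: "Tm g r T = (if even r then 1 else -1) *
      (cis d * cis d / cis (real_of_int r * d) * Fm (Cdist g) (T / cis (real_of_int r * d)))"
      using Tm_formula[OF g T1', of r] unfolding d_def by simp
    have ev: "odd r" unfolding rs using False by simp
    have cr: "cis (real_of_int r * d) = - cis ((4 - real_of_int j) * d)"
    proof -
      have "real_of_int r * d = pi + (4 - real_of_int j) * d"
        unfolding rs using key by (simp add: algebra_simps)
      then show ?thesis by (simp only: cis_pi_add)
    qed
    have fin: "Tm g r (Tm g j (cis (real_of_int j * d) * u))
       = cis (real_of_int j * d) * (cis (-2*d) * Fm (Cdist g) (cis (-2*d) * Fm (Cdist g) u))"
    proof -
      have "T / cis (real_of_int r * d) = cis (-2*d) * Fm (Cdist g) u"
        unfolding T_def cr using fin1 by simp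
      moreover have "cis d * cis d / cis (real_of_int r * d) = - (cis (real_of_int j * d) * cis (-2*d))"
        unfolding cr using fin0 by simp
      ultimately show ?thesis unfolding TT T2 using ev by (simp add: mult.assoc)
    qed
    have P: "Pt g r = - cis ((2 - real_of_int j) * d) * cis (2*d - beta g)"
    proof -
      have "alpha g r - beta g = pi + ((4 - real_of_int j) * d - beta g)"
        unfolding alpha_def rs d_def[symmetric] using key by (simp add: algebra_simps)
      then have "Pt g r = - cis ((4 - real_of_int j) * d - beta g)" unfolding Pt_def by (simp only: cis_pi_add)
      moreover have "cis ((4 - real_of_int j) * d - beta g) = cis ((2 - real_of_int j) * d) * cis (2*d - beta g)"
        by (simp add: cis_mult algebra_simps)
      ultimately show ?thesis by simp
    qed
    have Q: "Qt g r = - cis ((2 - real_of_int j) * d) * cis (d + beta g)"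
    proof -
      have "alpha g (r - 1) + beta g = pi + ((3 - real_of_int j) * d + beta g)"
        unfolding alpha_def rs d_def[symmetric] using key by (simp add: algebra_simps)
      then have "Qt g r = - cis ((3 - real_of_int j) * d + beta g)" unfolding Qt_def by (simp only: cis_pi_add)
      moreover have "cis ((3 - real_of_int j) * d + beta g) = cis ((2 - real_of_int j) * d) * cis (d + beta g)"
        by (simp add: cis_mult algebra_simps)
      ultimately show ?thesis by simp
    qed
    show ?thesis
      apply (rule exI[of _ "-1"])
      apply (intro conjI)
      subgoal by simp
      subgoal unfolding TT T_def by simp
      subgoal unfolding P by simp
      subgoal unfolding Q by simp
      subgoal unfolding fin ..
      done
  qed
qed




lemma Pt_rot: "Pt g i = cis (real_of_int i * delta g) * cis (- beta g)"
  unfolding Pt_def alpha_def by (simp add: cis_mult)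

lemma Qt_rot: "Qt g i = cis (real_of_int i * delta g) * cis (beta g - delta g)"
  unfolding Qt_def alpha_def by (simp add: cis_mult algebra_simps)

lemma Pt_unit: "cmod (Pt g i) = 1" unfolding Pt_def by simp
lemma Qt_unit: "cmod (Qt g i) = 1" unfolding Qt_def by simp

theorem lemma3p6:
  fixes g :: nat and A :: "int \<Rightarrow> complex" and j :: int and x :: complex
  assumes "g \<ge> 2"
    and "\<forall>i. A (i + Nsides g) = A i"
    and "\<forall>i. A i \<in> arc_oo (Pt g i) (Qt g i)"
  shows "(x \<in> arc_co (A j) (Qt g j) \<and>
            Tm g (j - 1) x \<in> arc_oc (Pt g (theta g (j - 1))) (A (theta g (j - 1)))
          \<longrightarrow> Tm g (theta g (j - 1) - 1) (Tm g (j - 1) x) \<in> arc_oo x (Pt g (j + 1)))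
       \<and> (x \<in> arc_oc (Pt g j) (A j) \<and>
            Tm g j x \<in> arc_co (A (rho g j + 1)) (Qt g (rho g j + 1))
          \<longrightarrow> Tm g (rho g j + 1) (Tm g j x) \<in> arc_oo (Qt g (j - 1)) x)"
proof -
  have g: "g \<ge> 2" by fact
  note B = basics[OF g]
  define d where "d = delta g"
  define bt where "bt = beta g"
  define C where "C = Cdist g"
  have C1: "C > 1" and r1: "cos bt * C = 1" and r2: "C^2 * cos d = 1"
    using B unfolding C_def bt_def d_def by auto
  have d0: "0 < d" "d < pi" using B(1,2) unfolding d_def by (auto intro: le_less_trans[of _ "pi/6"])
  have b0: "0 < bt" "bt < pi"
  proof -
    have "0 < cos (delta g)" "cos (delta g) < 1" using B by auto
    then have sq: "0 < sqrt (cos (delta g))" "sqrt (cos (delta g)) < 1" by auto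
    have "-1 < sqrt (cos (delta g))" using sq by linarith
    then show "0 < bt" "bt < pi" unfolding bt_def beta_def using arccos_lt_bounded[of "sqrt (cos (delta g))"] sq by auto
  qed
  have Au: "cmod (A i) = 1" for i using assms(3) arc_oo_unit by blast
  have Aori: "ori (Pt g i) (A i) (Qt g i) > 0" for i
    using assms(3) arc_oo_iff[OF Pt_unit Au Qt_unit] by blast
  have ej: "cmod (cis (real_of_int j * d)) = 1" "cis (real_of_int j * d) \<noteq> 0" by simp_all
  show ?thesis
  proof (intro conjI impI; elim conjE)
    assume hx: "x \<in> arc_co (A j) (Qt g j)"
      and hT: "Tm g (j - 1) x \<in> arc_oc (Pt g (theta g (j - 1))) (A (theta g (j - 1)))"
    define th where "th = theta g (j-1)"
    have x1: "cmod x = 1" using arc_co_cases[OF Au Qt_unit hx] by simp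
    have Hx: "ori (Pt g j) x (Qt g j) > 0"
      using arc_co_cases[OF Au Qt_unit hx] Aori[of j] cyc2[OF Pt_unit Au x1 Qt_unit] by auto
    have T1: "cmod (Tm g (j-1) x) = 1" using arc_oc_cases[OF Pt_unit Au hT] by simp
    have HT: "ori (Pt g th) (Tm g (j-1) x) (Qt g th) > 0"
      using arc_oc_cases[OF Pt_unit Au hT] Aori[of th] cyc1[OF Pt_unit T1 Au Qt_unit] unfolding th_def by auto
    define u where "u = x / cis (real_of_int j * d)"
    have xu: "x = cis (real_of_int j * d) * u" unfolding u_def using ej by simp
    have u1: "cmod u = 1" unfolding u_def using x1 by (simp add: norm_divide)
    obtain s where s: "s = 1 \<or> s = -1"
      and sT: "Tm g (j-1) (cis (real_of_int j * d) * u) = s * cis ((3 - real_of_int j) * d) * Fm (Cdist g) (cis d * u)"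
      and sP: "Pt g th = s * cis ((3 - real_of_int j) * d) * cis (-d - beta g)"
      and sQ: "Qt g th = s * cis ((3 - real_of_int j) * d) * cis (beta g - 2*d)"
      and sU: "Tm g (th - 1) (Tm g (j-1) (cis (real_of_int j * d) * u))
       = cis (real_of_int j * d) * (cis d * Fm (Cdist g) (cis d * cis d * Fm (Cdist g) (cis d * u)))"
      using part1_norm[OF g u1, of j] unfolding d_def th_def by blast
    define a where "a = s * cis ((3 - real_of_int j) * d)"
    have a1: "cmod a = 1" unfolding a_def using s by (auto simp: norm_mult)
    have H1: "ori (cis (-bt)) u (cis (bt-d)) > 0"
      using Hx ori_rot[OF ej(1), of "cis (-bt)" u "cis (bt-d)"] unfolding Pt_rot Qt_rot xu
      by (simp add: d_def bt_def)
    have H2: "ori (cis (-d-bt)) (Fm C (cis d * u)) (cis (bt-2*d)) > 0"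
      using HT ori_rot[OF a1, of "cis (-d-bt)" "Fm C (cis d * u)" "cis (bt-2*d)"] unfolding sP sQ xu sT
      by (simp add: a_def C_def bt_def mult.assoc)
    note N = coreN1[OF C1 r1 r2 d0 b0 u1 H1 H2]
    define V where "V = cis d * Fm C (cis d * cis d * Fm C (cis d * u))"
    have V1: "cmod V = 1" unfolding V_def using F_unit[OF C1] u1 by (simp add: norm_mult)
    have ee: "Tm g (theta g (j - 1) - 1) (Tm g (j - 1) x) = cis (real_of_int j * d) * V"
      using sU unfolding xu th_def V_def C_def .
    have pj: "Pt g (j+1) = cis (real_of_int j * d) * cis (d - bt)"
      unfolding Pt_def alpha_def d_def bt_def by (simp add: cis_mult algebra_simps)
    have "ori x (Tm g (theta g (j - 1) - 1) (Tm g (j - 1) x)) (Pt g (j + 1)) > 0"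
      unfolding ee pj unfolding xu ori_rot[OF ej(1)] using N unfolding V_def .
    then show "Tm g (theta g (j - 1) - 1) (Tm g (j - 1) x) \<in> arc_oo x (Pt g (j + 1))"
      using arc_oo_iff[OF x1 _ Pt_unit] V1 ee ej by (simp add: norm_mult)
  next
    assume hx: "x \<in> arc_oc (Pt g j) (A j)"
      and hT: "Tm g j x \<in> arc_co (A (rho g j + 1)) (Qt g (rho g j + 1))"
    define r where "r = rho g j + 1"
    have x1: "cmod x = 1" using arc_oc_cases[OF Pt_unit Au hx] by simp
    have Hx: "ori (Pt g j) x (Qt g j) > 0"
      using arc_oc_cases[OF Pt_unit Au hx] Aori[of j] cyc1[OF Pt_unit x1 Au Qt_unit] by auto
    have T1: "cmod (Tm g j x) = 1" using arc_co_cases[OF Au Qt_unit hT] by simp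
    have HT: "ori (Pt g r) (Tm g j x) (Qt g r) > 0"
      using arc_co_cases[OF Au Qt_unit hT] Aori[of r] cyc2[OF Pt_unit Au T1 Qt_unit] unfolding r_def by auto
    define u where "u = x / cis (real_of_int j * d)"
    have xu: "x = cis (real_of_int j * d) * u" unfolding u_def using ej by simp
    have u1: "cmod u = 1" unfolding u_def using x1 by (simp add: norm_divide)
    obtain s where s: "s = 1 \<or> s = -1"
      and sT: "Tm g j (cis (real_of_int j * d) * u) = s * cis ((2 - real_of_int j) * d) * Fm (Cdist g) u"
      and sP: "Pt g r = s * cis ((2 - real_of_int j) * d) * cis (2*d - beta g)"
      and sQ: "Qt g r = s * cis ((2 - real_of_int j) * d) * cis (d + beta g)"
      and sU: "Tm g r (Tm g j (cis (real_of_int j * d) * u))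
       = cis (real_of_int j * d) * (cis (-2*d) * Fm (Cdist g) (cis (-2*d) * Fm (Cdist g) u))"
      using part2_norm[OF g u1, of j] unfolding d_def r_def by blast
    define a where "a = s * cis ((2 - real_of_int j) * d)"
    have a1: "cmod a = 1" unfolding a_def using s by (auto simp: norm_mult)
    have H1: "ori (cis (-bt)) u (cis (bt-d)) > 0"
      using Hx ori_rot[OF ej(1), of "cis (-bt)" u "cis (bt-d)"] unfolding Pt_rot Qt_rot xu
      by (simp add: d_def bt_def)
    have H2: "ori (cis (2*d-bt)) (Fm C u) (cis (d+bt)) > 0"
      using HT ori_rot[OF a1, of "cis (2*d-bt)" "Fm C u" "cis (d+bt)"] unfolding sP sQ xu sT
      by (simp add: a_def C_def bt_def mult.assoc)
    note N = coreN2[OF C1 r1 r2 d0 b0 u1 H1 H2]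
    define V where "V = cis (-2*d) * Fm C (cis (-2*d) * Fm C u)"
    have V1: "cmod V = 1" unfolding V_def using F_unit[OF C1] u1 by (simp add: norm_mult)
    have ee: "Tm g (rho g j + 1) (Tm g j x) = cis (real_of_int j * d) * V"
      using sU unfolding xu r_def V_def C_def .
    have qj: "Qt g (j-1) = cis (real_of_int j * d) * cis (bt - 2*d)"
      unfolding Qt_def alpha_def d_def bt_def by (simp add: cis_mult algebra_simps)
    have "ori (Qt g (j - 1)) (Tm g (rho g j + 1) (Tm g j x)) x > 0"
      unfolding ee qj unfolding xu ori_rot[OF ej(1)] using N unfolding V_def .
    then show "Tm g (rho g j + 1) (Tm g j x) \<in> arc_oo (Qt g (j - 1)) x"
      using arc_oo_iff[OF Qt_unit _ x1] V1 ee ej by (simp add: norm_mult)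
  qed
qed


end
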